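(* Let $S^P$ denote the complexity function of the family of maximal configurations resistant to predators (in the one-dimensional Riviera model). Then for every $\rho$ with $\frac{1}{2} < \rho < \frac{2}{3}$, $$S^P(\rho) = (1 - \rho) \ln(1 - \rho) - (2\rho - 1) \ln(2\rho - 1) - (2 - 3\rho) \ln(2 - 3\rho).$$
   Context: A configuration of length $n\ge 0$ is a binary string $c_1c_2\cdots c_n$; $c_k=1$ means lot $k$ is occupied by a house, $c_k=0$ that it is empty. A house at position $k$ is blocked (from sunlight) if $2\le k\le n-1$ and $c_{k-1}=c_{k+1}=1$; lots beyond the ends of the string never obstruct sunlight. A configuration is permissible if no house is blocked. It is maximal (jammed) if it is permissible and, for every $k$ with $c_k=0$, the string obtained by setting $c_k=1$ is not permissible. A maximal configuration is resistant to predators if, for every $k$ with $c_k=0$, in the string obtained by setting $c_k=1$ the new house at position $k$ is blocked. Let $J_{k,n}$ be the number of such configurations of length $n$ with exactly $k$ occupied lots; whenever $J_{k,n}=0$ it is redefined to be $1$. The complexity function is $S(\rho)=\sup \limsup_{i\to\infty} \frac{\ln J_{k_i,n_i}}{n_i}$, where the supremum ranges over all sequences $((k_i,n_i))_i$ of pairs of non-negative integers with $n_i\to\infty$ and $k_i/n_i\to\rho$. *)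

theory Defs
  imports Complex_Main "HOL-Library.Extended_Real" "HOL-Library.Liminf_Limsup"
begin

text \<open>A configuration of length n is a list c of booleans of length n;
  list index i (0-based) corresponds to lot i+1. True = occupied.\<close>

definition blocked :: "bool list \<Rightarrow> nat \<Rightarrow> bool" where
  "blocked c i \<longleftrightarrow> 1 \<le> i \<and> i + 1 < length c \<and> c ! (i - 1) \<and> c ! (i + 1)"

definition permissible :: "bool list \<Rightarrow> bool" where
  "permissible c \<longleftrightarrow> (\<forall>i < length c. c ! i \<longrightarrow> \<not> blocked c i)"

definition maximal_config :: "bool list \<Rightarrow> bool" where
  "maximal_config c \<longleftrightarrow> permissible c \<and>
     (\<forall>i < length c. \<not> c ! i \<longrightarrow> \<not> permissible (c[i := True]))"

definition resistant_config :: "bool list \<Rightarrow> bool" where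
  "resistant_config c \<longleftrightarrow> maximal_config c \<and>
     (\<forall>i < length c. \<not> c ! i \<longrightarrow> blocked (c[i := True]) i)"

definition JP :: "nat \<Rightarrow> nat \<Rightarrow> nat" where
  "JP k n = (let m = card {c :: bool list. length c = n \<and> resistant_config c \<and>
                                  length (filter id c) = k}
             in if m = 0 then 1 else m)"

definition complexityP :: "real \<Rightarrow> ereal" where
  "complexityP \<rho> = (SUP s \<in> {s :: nat \<Rightarrow> nat \<times> nat.
        filterlim (\<lambda>i. snd (s i)) at_top sequentially \<and>
        ((\<lambda>i. real (fst (s i)) / real (snd (s i))) \<longlonglongrightarrow> \<rho>)}.
      limsup (\<lambda>i. ereal (ln (real (JP (fst (s i)) (snd (s i)))) / real (snd (s i)))))"

end

theory Submission
  imports Defs "HOL-Real_Asymp.Real_Asymp"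
begin


definition LL :: "bool list \<Rightarrow> bool" where
  "LL c \<longleftrightarrow> (\<forall>i<length c. \<not> c!i \<longrightarrow> 0<i \<and> i+1<length c \<and> c!(i-1) \<and> c!(i+1))
     \<and> (\<forall>i. i+2 < length c \<longrightarrow> \<not>(c!i \<and> c!(i+1) \<and> c!(i+2)))"

lemma permissible_iff:
  "permissible c \<longleftrightarrow> (\<forall>i. i+2 < length c \<longrightarrow> \<not>(c!i \<and> c!(i+1) \<and> c!(i+2)))"
  unfolding permissible_def blocked_def
proof safe
  fix i assume H: "\<forall>i<length c. c ! i \<longrightarrow> \<not> (1 \<le> i \<and> i + 1 < length c \<and> c ! (i - 1) \<and> c ! (i + 1))"
    "i + 2 < length c" "c ! i" "c ! (i + 1)" "c ! (i + 2)"
  then show False using H(1)[rule_format, of "i+1"] by auto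
next
  fix i assume H: "\<forall>i. i + 2 < length c \<longrightarrow> \<not> (c ! i \<and> c ! (i + 1) \<and> c ! (i + 2))"
    "i < length c" "c ! i" "1 \<le> i" "i + 1 < length c" "c ! (i - 1)" "c ! (i + 1)"
  then show False using H(1)[rule_format, of "i-1"] by auto
qed

lemma resistant_iff: "resistant_config c \<longleftrightarrow> LL c"
proof -
  have B: "blocked (c[i := True]) i \<longleftrightarrow> 0<i \<and> i+1<length c \<and> c!(i-1) \<and> c!(i+1)" for i
    unfolding blocked_def by (cases "i < length c") auto
  show ?thesis
  proof
    assume "resistant_config c"
    then show "LL c" unfolding resistant_config_def maximal_config_def LL_def
      permissible_iff B by auto
  next
    assume L: "LL c"
    have "\<not> permissible (c[i := True])" if "i < length c" "\<not> c!i" for i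
    proof -
      from L that have "0<i" "i+1<length c" "c!(i-1)" "c!(i+1)" unfolding LL_def by auto
      then show ?thesis unfolding permissible_iff
        by (auto intro!: exI[of _ "i-1"])
    qed
    then show "resistant_config c" using L unfolding resistant_config_def maximal_config_def LL_def
      permissible_iff B by auto
  qed
qed


lemma LL_F: "\<not> LL (False#r)"
  unfolding LL_def by auto

lemma LL_TTT: "\<not> LL (True#True#True#r)"
  unfolding LL_def by (auto intro!: exI[of _ 0])

lemma LL_T1: "LL [True]" and LL_T2: "LL [True,True]" and LL_TF0: "\<not> LL [True,False]"
  unfolding LL_def by (auto simp: less_Suc_eq)

lemma LL_headT: "LL (x#r) \<Longrightarrow> x"
  unfolding LL_def by (cases x) auto

lemma LL_TF: "LL (True#False#r) \<longleftrightarrow> r \<noteq> [] \<and> LL r"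
proof
  assume L: "LL (True#False#r)"
  let ?c = "True#False#r"
  have r: "r \<noteq> []" using L LL_TF0 by auto
  have Z: "0<i \<and> i+1<length r \<and> r!(i-1) \<and> r!(i+1)" if "i<length r" "\<not> r!i" for i
  proof -
    have "0<i+2 \<and> i+2+1<length ?c \<and> ?c!(i+2-1) \<and> ?c!(i+2+1)"
      using L that unfolding LL_def by (metis add_2_eq_Suc' length_Cons nth_Cons_Suc Suc_less_eq)
    then show ?thesis by (cases i) auto
  qed
  have N: "\<not>(r!i \<and> r!(i+1) \<and> r!(i+2))" if "i+2<length r" for i
    using L that unfolding LL_def
    by (metis add_2_eq_Suc' length_Cons nth_Cons_Suc Suc_less_eq add_Suc)
  show "r \<noteq> [] \<and> LL r" using r Z N unfolding LL_def by blast
next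
  assume A: "r \<noteq> [] \<and> LL r"
  then have r0: "r!0" using LL_headT by (cases r) auto
  let ?c = "True#False#r"
  have Z: "0<i \<and> i+1<length ?c \<and> ?c!(i-1) \<and> ?c!(i+1)" if "i<length ?c" "\<not> ?c!i" for i
  proof -
    have "i = 0 \<or> i = 1 \<or> i \<ge> 2" by linarith
    then consider "i = 0" | "i = 1" | j where "i = j+2"
      using le_Suc_ex[of 2 i] by (auto simp: add.commute)
    then show ?thesis
    proof cases
      case 1 then show ?thesis using that by simp
    next
      case 2 then show ?thesis using that r0 A by (cases r) auto
    next
      case 3
      then have "j < length r" "\<not> r!j" using that by auto
      then have "0<j \<and> j+1<length r \<and> r!(j-1) \<and> r!(j+1)" using A unfolding LL_def by blast
      then show ?thesis using 3 by (cases j) auto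
    qed
  qed
  have N: "\<not>(?c!i \<and> ?c!(i+1) \<and> ?c!(i+2))" if "i+2<length ?c" for i
  proof -
    have "i = 0 \<or> i = 1 \<or> i \<ge> 2" by linarith
    then consider "i = 0" | "i = 1" | j where "i = j+2"
      using le_Suc_ex[of 2 i] by (auto simp: add.commute)
    then show ?thesis
    proof cases
      case 3
      then have "j+2 < length r" using that by auto
      then have "\<not>(r!j \<and> r!(j+1) \<and> r!(j+2))" using A unfolding LL_def by blast
      then show ?thesis using 3 by auto
    qed auto
  qed
  show "LL ?c" using Z N unfolding LL_def by blast
qed


lemma LL_TTF: "LL (True#True#False#r) \<longleftrightarrow> r \<noteq> [] \<and> LL r"
proof
  assume L: "LL (True#True#False#r)"
  let ?c = "True#True#False#r"
  have r: "r \<noteq> []" using L unfolding LL_def by (auto dest!: spec[of _ 2])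
  have Z: "0<i \<and> i+1<length r \<and> r!(i-1) \<and> r!(i+1)" if "i<length r" "\<not> r!i" for i
  proof -
    have "0<i+3 \<and> i+3+1<length ?c \<and> ?c!(i+3-1) \<and> ?c!(i+3+1)"
      using L that unfolding LL_def by (metis add_Suc_right numeral_3_eq_3 add_0_right length_Cons nth_Cons_Suc Suc_less_eq)
    then show ?thesis by (cases i) auto
  qed
  have N: "\<not>(r!i \<and> r!(i+1) \<and> r!(i+2))" if "i+2<length r" for i
  proof -
    have "\<not>(?c!(i+3) \<and> ?c!(i+3+1) \<and> ?c!(i+3+2))" using L that unfolding LL_def by auto
    then show ?thesis by (simp add: numeral_3_eq_3 numeral_2_eq_2)
  qed
  show "r \<noteq> [] \<and> LL r" using r Z N unfolding LL_def by blast
next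
  assume A: "r \<noteq> [] \<and> LL r"
  then have r0: "r!0" using LL_headT by (cases r) auto
  let ?c = "True#True#False#r"
  have Z: "0<i \<and> i+1<length ?c \<and> ?c!(i-1) \<and> ?c!(i+1)" if "i<length ?c" "\<not> ?c!i" for i
  proof -
    have "i = 0 \<or> i = 1 \<or> i = 2 \<or> i \<ge> 3" by linarith
    then consider "i = 0" | "i = 1" | "i = 2" | j where "i = j+3"
      using le_Suc_ex[of 3 i] by (auto simp: add.commute)
    then show ?thesis
    proof cases
      case 1 then show ?thesis using that by simp
    next
      case 2 then show ?thesis using that by simp
    next
      case 3 then show ?thesis using that r0 A by (cases r) auto
    next
      case 4
      then have "j < length r" "\<not> r!j" using that by auto
      then have "0<j \<and> j+1<length r \<and> r!(j-1) \<and> r!(j+1)" using A unfolding LL_def by blast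
      then show ?thesis using 4 by (cases j) (auto simp: numeral_3_eq_3)
    qed
  qed
  have N: "\<not>(?c!i \<and> ?c!(i+1) \<and> ?c!(i+2))" if "i+2<length ?c" for i
  proof -
    have "i = 0 \<or> i = 1 \<or> i = 2 \<or> i \<ge> 3" by linarith
    then consider "i = 0" | "i = 1" | "i = 2" | j where "i = j+3"
      using le_Suc_ex[of 3 i] by (auto simp: add.commute)
    then show ?thesis
    proof cases
      case 4
      then have "j+2 < length r" using that by auto
      then have "\<not>(r!j \<and> r!(j+1) \<and> r!(j+2))" using A unfolding LL_def by blast
      then show ?thesis using 4 by (simp add: numeral_3_eq_3 numeral_2_eq_2)
    qed (auto simp: numeral_2_eq_2)
  qed
  show "LL ?c" using Z N unfolding LL_def by blast
qed


definition g :: "nat \<Rightarrow> nat \<Rightarrow> nat" where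
  "g n k = (if n+1 \<le> 2*k then (n+1-k) choose (2*k-n-1) else 0)"

lemma g_rec:
  assumes "n \<ge> 3"
  shows "g n k = (if 1\<le>k then g (n-2) (k-1) else 0) + (if 2\<le>k \<and> 4\<le>n then g (n-3) (k-2) else 0)"
proof -
  consider "k = 0" | "k = 1" | j where "k = j+2" by (metis add_2_eq_Suc' not0_implies_Suc One_nat_def)
  then show ?thesis
  proof cases
    case 1 then show ?thesis by (simp add: g_def)
  next
    case 2 then show ?thesis using assms by (simp add: g_def)
  next
    case 3
    show ?thesis
    proof (cases "n = 3")
      case True
      have "g 3 k = g 1 (k-1)"
      proof (cases "j = 0")
        case True then show ?thesis using 3 by (simp add: g_def)
      next
        case False
        have "g 3 k = 0" using 3 False by (simp add: g_def binomial_eq_0)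
        moreover have "g 1 (k-1) = 0" using 3 False by (simp add: g_def binomial_eq_0)
        ultimately show ?thesis by simp
      qed
      then show ?thesis using 3 True by simp
    next
      case False
      obtain m where m0: "n = m+3" using le_Suc_ex[OF assms] by (auto simp: add.commute)
      then have m: "n = m+3" "m \<ge> 1" using False by auto
      have G: "g n k = (if m \<le> 2*j then (m+2-j) choose (2*j-m) else 0)"
        using m 3 by (simp add: g_def)
      have G1: "g (n-2) (k-1) = (if m \<le> 2*j then (m+1-j) choose (2*j-m) else 0)"
        using m 3 by (simp add: g_def)
      have G2: "g (n-3) (k-2) = (if m + 1 \<le> 2*j then (m+1-j) choose (2*j-m-1) else 0)"
        using m 3 by (simp add: g_def)
      have E: "(if m \<le> 2*j then (m+2-j) choose (2*j-m) else 0) =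
            (if m \<le> 2*j then (m+1-j) choose (2*j-m) else 0) +
            (if m + 1 \<le> 2*j then (m+1-j) choose (2*j-m-1) else 0)"
      proof (cases "m = 2*j")
        case True then show ?thesis by simp
      next
        case ne: False
        show ?thesis
        proof (cases "m < 2*j")
          case False then show ?thesis using ne by simp
        next
          case lt: True
          then obtain d where d: "2*j - m = Suc d" by (metis zero_less_diff not0_implies_Suc neq0_conv)
          show ?thesis
          proof (cases "j \<le> m+1")
            case True
            then have b: "m+2-j = Suc (m+1-j)" by simp
            show ?thesis using lt d unfolding b by (simp add: binomial_Suc_Suc)
          next
            case False
            then have "m+2-j = 0" "m+1-j = 0" by auto
            then show ?thesis using lt d by simp
          qed
        qed
      qed
      have "n-2 = m+1" "k-1 = j+1" "n-3 = m" "k-2 = j" using m 3 by auto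
      then show ?thesis using G G1 G2 E m 3 by simp
    qed
  qed
qed


definition SS :: "nat \<Rightarrow> nat \<Rightarrow> bool list set" where
  "SS n k = {c. length c = n \<and> LL c \<and> length (filter id c) = k}"

lemma finite_SS: "finite (SS n k)"
proof -
  have "SS n k \<subseteq> {c. length c = n}" unfolding SS_def by auto
  moreover have "finite {xs :: bool list. set xs \<subseteq> UNIV \<and> length xs = n}"
    by (rule finite_lists_length_eq) simp
  then have "finite {c :: bool list. length c = n}" by simp
  ultimately show ?thesis by (rule finite_subset)
qed

lemma SS_1: "SS 1 k = (if k = 1 then {[True]} else {})"
proof -
  have "c \<in> SS 1 k \<longleftrightarrow> c = [True] \<and> k = 1" for c
  proof
    assume "c \<in> SS 1 k"
    then have c0: "length c = 1" "LL c" "length (filter id c) = k" unfolding SS_def by auto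
    then obtain x where "c = [x]" by (cases c) auto
    then have c: "c = [x]" "LL c" "length (filter id c) = k" using c0 by auto
    then have "x" using LL_headT by auto
    then show "c = [True] \<and> k = 1" using c by auto
  qed (auto simp: SS_def LL_T1)
  then show ?thesis by auto
qed

lemma SS_2: "SS 2 k = (if k = 2 then {[True,True]} else {})"
proof -
  have "c \<in> SS 2 k \<longleftrightarrow> c = [True,True] \<and> k = 2" for c
  proof
    assume "c \<in> SS 2 k"
    then have c0: "length c = 2" "LL c" "length (filter id c) = k" unfolding SS_def by auto
    then obtain x y where "c = [x,y]"
      by (cases c; cases "tl c") auto
    then have c: "c = [x,y]" "LL c" "length (filter id c) = k" using c0 by auto
    then have "x" using LL_headT by auto
    moreover have "y" using c LL_TF0 \<open>x\<close> by (cases y) auto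
    ultimately show "c = [True,True] \<and> k = 2" using c by auto
  qed (auto simp: SS_def LL_T2)
  then show ?thesis by auto
qed

lemma SS_rec:
  assumes "n \<ge> 3"
  shows "SS n k = (if 1 \<le> k then (\<lambda>r. True#False#r) ` SS (n-2) (k-1) else {}) \<union>
                  (if 2 \<le> k \<and> 4 \<le> n then (\<lambda>r. True#True#False#r) ` SS (n-3) (k-2) else {})"
    (is "_ = ?A \<union> ?B")
proof
  show "SS n k \<subseteq> ?A \<union> ?B"
  proof
    fix c assume c: "c \<in> SS n k"
    then have len: "length c = n" and L: "LL c" and K: "length (filter id c) = k" unfolding SS_def by auto
    then obtain x y z r where cc: "c = x#y#z#r" using assms
      by (metis length_Suc_conv numeral_3_eq_3 Suc_le_length_iff)
    have x: x using L cc LL_headT by auto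
    show "c \<in> ?A \<union> ?B"
    proof (cases y)
      case False
      then have "LL (z#r)" using L cc x LL_TF by auto
      moreover have "1 \<le> k" using K cc x by auto
      ultimately have "z#r \<in> SS (n-2) (k-1)" using len K cc x False unfolding SS_def by auto
      then show ?thesis using cc x False \<open>1 \<le> k\<close> by auto
    next
      case True
      then have z: "\<not> z" using L cc x LL_TTT by auto
      then have "LL r" "r \<noteq> []" using L cc x True LL_TTF by auto
      moreover have "2 \<le> k" using K cc x True by auto
      moreover have "4 \<le> n" using len cc \<open>r \<noteq> []\<close> by (cases r) auto
      ultimately have "r \<in> SS (n-3) (k-2)" using len K cc x True z unfolding SS_def by auto
      then show ?thesis using cc x True z \<open>2 \<le> k\<close> \<open>4 \<le> n\<close> by auto
    qed
  qed
next
  show "?A \<union> ?B \<subseteq> SS n k"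
  proof
    fix c assume "c \<in> ?A \<union> ?B"
    then consider r where "c = True#False#r" "1 \<le> k" "r \<in> SS (n-2) (k-1)"
      | r where "c = True#True#False#r" "2 \<le> k" "4 \<le> n" "r \<in> SS (n-3) (k-2)"
      by (auto split: if_splits)
    then show "c \<in> SS n k"
    proof cases
      case 1
      then have "r \<noteq> []" using assms unfolding SS_def by auto
      have r: "length r = n-2" "LL r" "length (filter id r) = k-1" using 1 unfolding SS_def by auto
      have "LL c" using 1(1) r(2) \<open>r \<noteq> []\<close> LL_TF by simp
      moreover have "length c = n" using 1(1) r(1) assms by simp
      moreover have "length (filter id c) = k" using 1(1,2) r(3) by simp
      ultimately show ?thesis unfolding SS_def by simp
    next
      case 2
      have r: "length r = n-3" "LL r" "length (filter id r) = k-2" using 2 unfolding SS_def by auto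
      have "r \<noteq> []" using r(1) 2(3) by auto
      have "LL c" using 2(1) r(2) \<open>r \<noteq> []\<close> LL_TTF by simp
      moreover have "length c = n" using 2(1) r(1) 2(3) by simp
      moreover have "length (filter id c) = k" using 2(1,2) r(3) by simp
      ultimately show ?thesis unfolding SS_def by simp
    qed
  qed
qed

lemma card_SS: "n \<ge> 1 \<Longrightarrow> card (SS n k) = g n k"
proof (induction n arbitrary: k rule: less_induct)
  case (less n)
  consider "n = 1" | "n = 2" | "n \<ge> 3" using less.prems by linarith
  then show ?case
  proof cases
    case 1 then show ?thesis unfolding 1 SS_1 by (auto simp: g_def binomial_eq_0)
  next
    case 2 then show ?thesis unfolding 2 SS_2 by (auto simp: g_def binomial_eq_0)
  next
    case 3
    let ?A = "(if 1 \<le> k then (\<lambda>r. True#False#r) ` SS (n-2) (k-1) else {})"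
    let ?B = "(if 2 \<le> k \<and> 4 \<le> n then (\<lambda>r. True#True#False#r) ` SS (n-3) (k-2) else {})"
    have fA: "finite ?A" "finite ?B" using finite_SS by auto
    have dj: "?A \<inter> ?B = {}" by auto
    have cA: "card ?A = (if 1 \<le> k then g (n-2) (k-1) else 0)"
      using less.IH[of "n-2" "k-1"] 3 by (auto simp: card_image inj_on_def)
    have cB: "card ?B = (if 2 \<le> k \<and> 4 \<le> n then g (n-3) (k-2) else 0)"
      using less.IH[of "n-3" "k-2"] 3 by (auto simp: card_image inj_on_def)
    show ?thesis unfolding SS_rec[OF 3] card_Un_disjoint[OF fA dj] cA cB g_rec[OF 3] ..
  qed
qed

lemma JP_g: "n \<ge> 1 \<Longrightarrow> JP k n = (if g n k = 0 then 1 else g n k)"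
  unfolding JP_def using card_SS[of n k] unfolding SS_def resistant_iff by simp



lemma ln_step: "real m * ln (real m + 1) - real m * ln (real m) \<le> 1"
proof (cases "m = 0")
  case False
  then have m: "real m > 0" by simp
  have "ln ((real m + 1) / real m) \<le> (real m + 1) / real m - 1"
    by (rule ln_le_minus_one) (use m in simp)
  also have "\<dots> = 1 / real m" using m by (simp add: field_simps)
  finally have "ln (real m + 1) - ln (real m) \<le> 1 / real m"
    using m by (simp add: ln_div)
  then have "real m * (ln (real m + 1) - ln (real m)) \<le> real m * (1 / real m)"
    using m by (intro mult_left_mono) auto
  then show ?thesis using m by (simp add: algebra_simps)
qed simp

lemma ln_fact_lower: "real m * ln (real m) - real m \<le> ln (fact m)"
proof (induction m)
  case (Suc m)
  have "ln (fact (Suc m) :: real) = ln (fact m) + ln (real m + 1)"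
    by (simp add: ln_mult add.commute)
  moreover have "(real m + 1) * ln (real m + 1) = real m * ln (real m + 1) + ln (real m + 1)"
    by (simp add: distrib_right)
  moreover have C: "real (Suc m) = real m + 1" by simp
  ultimately show ?case unfolding C using Suc ln_step[of m] by linarith
qed simp

lemma ln_fact_upper: "ln (fact m) \<le> (real m + 1) * ln (real m + 1) - real m"
proof (induction m)
  case (Suc m)
  have "ln (fact (Suc m) :: real) = ln (fact m) + ln (real m + 1)"
    by (simp add: ln_mult add.commute)
  have "ln ((real m + 1) / (real m + 2)) \<le> (real m + 1) / (real m + 2) - 1"
    by (rule ln_le_minus_one) simp
  also have "\<dots> = - 1 / (real m + 2)" by (simp add: field_simps)
  finally have "ln (real m + 1) - ln (real m + 2) \<le> - 1 / (real m + 2)"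
    by (simp add: ln_div)
  then have "(real m + 2) * (ln (real m + 1) - ln (real m + 2)) \<le> (real m + 2) * (- 1 / (real m + 2))"
    by (intro mult_left_mono) auto
  then have A: "(real m + 2) * ln (real m + 1) - (real m + 2) * ln (real m + 2) \<le> -1"
    by (simp only: right_diff_distrib) simp
  have B: "(real m + 2) * ln (real m + 1) = (real m + 1) * ln (real m + 1) + ln (real m + 1)"
    by (simp add: distrib_right)
  have C: "real (Suc m) = real m + 1" "real m + 1 + 1 = real m + 2" by simp_all
  show ?case unfolding C using Suc \<open>ln (fact (Suc m) :: real) = _\<close> A B by linarith
qed simp

definition EF :: "nat \<Rightarrow> real" where
  "EF m = ln (fact m) - (real m * ln (real m) - real m)"

lemma EF_bounds: "0 \<le> EF m" "EF m \<le> ln (real m + 1) + 1"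
proof -
  show "0 \<le> EF m" using ln_fact_lower[of m] by (simp add: EF_def)
  show "EF m \<le> ln (real m + 1) + 1"
  proof -
    have "(real m + 1) * ln (real m + 1) = real m * ln (real m + 1) + ln (real m + 1)"
      by (simp add: distrib_right)
    then show ?thesis using ln_fact_upper[of m] ln_step[of m] unfolding EF_def by linarith
  qed
qed

definition FF :: "real \<Rightarrow> real" where "FF x = x * ln x"

lemma ln_binom:
  assumes "d \<le> b"
  shows "ln (real (b choose d)) = FF (real b) - FF (real d) - FF (real (b-d)) + (EF b - EF d - EF (b-d))"
proof -
  have "real (b choose d) = fact b / (fact d * fact (b-d))" using binomial_fact[OF assms] by simp
  then have "ln (real (b choose d)) = ln (fact b) - ln (fact d) - ln (fact (b-d))"
    by (simp add: ln_div ln_mult)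
  moreover have "real (b - d) = real b - real d" using assms by simp
  ultimately show ?thesis unfolding EF_def FF_def by (simp add: algebra_simps)
qed

lemma err_bound:
  assumes "d \<le> b"
  shows "\<bar>EF b - EF d - EF (b-d)\<bar> \<le> 2 * (ln (real b + 1) + 1)"
proof -
  have "ln (real d + 1) \<le> ln (real b + 1)" "ln (real (b-d) + 1) \<le> ln (real b + 1)"
    using assms by auto
  moreover have gen: "\<And>x y z L L' L'' :: real. \<lbrakk>0\<le>x; x\<le>L+1; 0\<le>y; y\<le>L'+1; L' \<le> L; 0\<le>z; z\<le>L''+1; L''\<le>L\<rbrakk>
      \<Longrightarrow> \<bar>x-y-z\<bar> \<le> 2*(L+1)" by (simp add: abs_le_iff)
  ultimately show ?thesis using EF_bounds[of b] EF_bounds[of d] EF_bounds[of "b-d"] by blast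
qed

lemma FF_scale:
  assumes "x > 0" "N > 0"
  shows "FF (x / N) = FF x / N - x * ln N / N"
  using assms unfolding FF_def by (simp add: ln_div field_simps)

lemma FF_cont: "(f \<longlongrightarrow> l) F \<Longrightarrow> l > 0 \<Longrightarrow> ((\<lambda>i. FF (f i)) \<longlongrightarrow> FF l) F"
  unfolding FF_def by (intro tendsto_intros) auto




lemma key:
  fixes k n :: "nat \<Rightarrow> nat" and \<rho> :: real
  assumes n: "filterlim n at_top sequentially"
    and kn: "(\<lambda>i. real (k i) / real (n i)) \<longlonglongrightarrow> \<rho>"
    and r1: "1/2 < \<rho>" and r2: "\<rho> < 2/3"
  shows "(\<lambda>i. ln (real (JP (k i) (n i))) / real (n i)) \<longlonglongrightarrow>
           FF (1 - \<rho>) - FF (2*\<rho> - 1) - FF (2 - 3*\<rho>)"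
proof -
  define N where "N i = real (n i)" for i
  define K where "K i = real (k i)" for i
  have NT: "filterlim N at_top sequentially"
    unfolding N_def by (rule filterlim_compose[OF filterlim_real_sequentially n])
  have inv: "(\<lambda>i. 1 / N i) \<longlonglongrightarrow> 0"
    using tendsto_inverse_0_at_top[OF NT] by (simp add: divide_inverse)
  have KN: "(\<lambda>i. K i / N i) \<longlonglongrightarrow> \<rho>" using kn unfolding K_def N_def .
  define bN where "bN i = 1 + 1 / N i - K i / N i" for i
  define dN where "dN i = 2 * (K i / N i) - 1 - 1 / N i" for i
  define eN where "eN i = 2 + 2 * (1 / N i) - 3 * (K i / N i)" for i
  have bL: "bN \<longlonglongrightarrow> 1 - \<rho>" unfolding bN_def
    using tendsto_diff[OF tendsto_add[OF tendsto_const inv] KN] by simp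
  have dL: "dN \<longlonglongrightarrow> 2*\<rho> - 1" unfolding dN_def
    using tendsto_diff[OF tendsto_diff[OF tendsto_mult[OF tendsto_const KN] tendsto_const] inv] by simp
  have eL: "eN \<longlonglongrightarrow> 2 - 3*\<rho>" unfolding eN_def
    using tendsto_diff[OF tendsto_add[OF tendsto_const tendsto_mult[OF tendsto_const inv]]
        tendsto_mult[OF tendsto_const KN]] by simp
  have ev1: "eventually (\<lambda>i. 0 < dN i) sequentially" using order_tendstoD(1)[OF dL] r1 by simp
  have ev2: "eventually (\<lambda>i. 0 < eN i) sequentially" using order_tendstoD(1)[OF eL] r2 by simp
  have ev3: "eventually (\<lambda>i. 1 \<le> n i) sequentially" using n by (simp add: filterlim_at_top)
  define R where "R i = EF (n i + 1 - k i) - EF (2 * k i - n i - 1) - EF (n i + 1 - k i - (2 * k i - n i - 1))" for i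
  have gA: "((\<lambda>x::real. 2 * (ln (x + 2) + 1) / x) \<longlongrightarrow> 0) at_top" by real_asymp
  have gL: "(\<lambda>i. 2 * (ln (N i + 2) + 1) / N i) \<longlonglongrightarrow> 0"
    by (rule filterlim_compose[OF gA NT])
  have main: "eventually (\<lambda>i. ln (real (JP (k i) (n i))) / real (n i) =
       FF (bN i) - FF (dN i) - FF (eN i) + R i / N i \<and>
       \<bar>R i / N i\<bar> \<le> 2 * (ln (N i + 2) + 1) / N i) sequentially"
    using ev1 ev2 ev3
  proof eventually_elim
    case (elim i)
    have Np: "N i > 0" using elim(3) unfolding N_def by simp
    have d1: "dN i * N i = 2 * K i - N i - 1" using Np unfolding dN_def by (simp add: field_simps)
    have d2: "0 < dN i * N i" using elim(1) Np by simp
    have h1: "2 * K i > N i + 1" using d1 d2 by linarith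
    have e1: "eN i * N i = 2 * N i + 2 - 3 * K i" using Np unfolding eN_def by (simp add: field_simps)
    have e2: "0 < eN i * N i" using elim(2) Np by simp
    have h2: "3 * K i < 2 * N i + 2" using e1 e2 by linarith
    have n1: "n i + 2 \<le> 2 * k i" using h1 unfolding N_def K_def by linarith
    have n2: "3 * k i < 2 * n i + 2" using h2 unfolding N_def K_def by linarith
    define b where "b = n i + 1 - k i"
    define d where "d = 2 * k i - n i - 1"
    have db: "d \<le> b" "0 < d" "d < b" using n1 n2 unfolding b_def d_def by auto
    have rb: "real b = N i + 1 - K i" using n2 unfolding b_def N_def K_def by auto
    have rd: "real d = 2 * K i - N i - 1" using n1 unfolding d_def N_def K_def by auto
    have re: "real (b - d) = 2 * N i + 2 - 3 * K i" using db rb rd by simp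
    have gnk: "g (n i) (k i) = b choose d" using n1 unfolding g_def b_def d_def by simp
    have JP: "JP (k i) (n i) = b choose d"
      using JP_g[OF elim(3), of "k i"] gnk zero_less_binomial[OF db(1)] by simp
    have LB: "ln (real (JP (k i) (n i))) = FF (real b) - FF (real d) - FF (real (b-d)) + R i"
    proof -
      have Ri: "R i = EF b - EF d - EF (b-d)" unfolding R_def b_def d_def by (rule refl)
      show ?thesis unfolding JP Ri by (rule ln_binom[OF db(1)])
    qed
    have bb: "bN i = real b / N i" "dN i = real d / N i" "eN i = real (b-d) / N i"
      unfolding bN_def dN_def eN_def rb rd re using Np by (simp_all add: field_simps)
    have pos: "real b > 0" "real d > 0" "real (b - d) > 0" using db by auto
    have eq: "ln (real (JP (k i) (n i))) / real (n i) = FF (bN i) - FF (dN i) - FF (eN i) + R i / N i"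
      unfolding bb FF_scale[OF pos(1) Np] FF_scale[OF pos(2) Np] FF_scale[OF pos(3) Np] LB
      using db rb rd re Np unfolding N_def[symmetric] by (simp add: field_simps)
    have "\<bar>R i\<bar> \<le> 2 * (ln (real b + 1) + 1)"
      using err_bound[OF db(1)] unfolding R_def b_def d_def by (simp only:)
    also have "\<dots> \<le> 2 * (ln (N i + 2) + 1)" using rb pos Np by (simp add: K_def)
    finally have "\<bar>R i / N i\<bar> \<le> 2 * (ln (N i + 2) + 1) / N i"
      using Np by (simp add: abs_div divide_right_mono)
    then show ?case using eq by simp
  qed
  have Rl: "(\<lambda>i. R i / N i) \<longlonglongrightarrow> 0"
  proof (rule tendsto_sandwich[of "\<lambda>i. - (2 * (ln (N i + 2) + 1) / N i)" _ _
          "\<lambda>i. 2 * (ln (N i + 2) + 1) / N i"])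
    show "eventually (\<lambda>i. - (2 * (ln (N i + 2) + 1) / N i) \<le> R i / N i) sequentially"
      using main by eventually_elim linarith
    show "eventually (\<lambda>i. R i / N i \<le> 2 * (ln (N i + 2) + 1) / N i) sequentially"
      using main by eventually_elim linarith
    show "(\<lambda>i. - (2 * (ln (N i + 2) + 1) / N i)) \<longlonglongrightarrow> 0"
      using tendsto_minus[OF gL] by simp
  qed (rule gL)
  have lim: "(\<lambda>i. FF (bN i) - FF (dN i) - FF (eN i) + R i / N i) \<longlonglongrightarrow>
      FF (1 - \<rho>) - FF (2*\<rho> - 1) - FF (2 - 3*\<rho>) + 0"
  proof -
    have a: "(\<lambda>i. FF (bN i)) \<longlonglongrightarrow> FF (1 - \<rho>)" using FF_cont[OF bL] r2 by simp
    have b: "(\<lambda>i. FF (dN i)) \<longlonglongrightarrow> FF (2*\<rho> - 1)" using FF_cont[OF dL] r1 by simp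
    have c: "(\<lambda>i. FF (eN i)) \<longlonglongrightarrow> FF (2 - 3*\<rho>)" using FF_cont[OF eL] r2 by simp
    show ?thesis by (rule tendsto_add[OF tendsto_diff[OF tendsto_diff[OF a b] c] Rl])
  qed
  have ev: "eventually (\<lambda>i. ln (real (JP (k i) (n i))) / real (n i) =
       FF (bN i) - FF (dN i) - FF (eN i) + R i / N i) sequentially"
    using main by (rule eventually_mono) blast
  have lim': "(\<lambda>i. FF (bN i) - FF (dN i) - FF (eN i) + R i / N i) \<longlonglongrightarrow>
      FF (1 - \<rho>) - FF (2*\<rho> - 1) - FF (2 - 3*\<rho>)" using lim by simp
  show ?thesis using tendsto_cong[OF ev] lim' by blast
qed


lemma witness:
  fixes \<rho> :: real assumes "0 < \<rho>"
  shows "(\<lambda>i. real (nat \<lfloor>\<rho> * real i\<rfloor>) / real i) \<longlonglongrightarrow> \<rho>"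
proof (rule tendsto_sandwich[of "\<lambda>i. \<rho> - inverse (real i)" _ _ "\<lambda>i. \<rho>"])
  have inv: "(\<lambda>i. inverse (real i)) \<longlonglongrightarrow> 0"
    by (rule tendsto_inverse_0_at_top[OF filterlim_real_sequentially])
  show "(\<lambda>i. \<rho> - inverse (real i)) \<longlonglongrightarrow> \<rho>"
    using tendsto_diff[OF tendsto_const inv, of \<rho>] by simp
  have ev: "eventually (\<lambda>i. (1::nat) \<le> i) sequentially" by (rule eventually_ge_at_top)
  have fl: "real (nat \<lfloor>\<rho> * real i\<rfloor>) = of_int \<lfloor>\<rho> * real i\<rfloor>" for i
    using assms by simp
  show "eventually (\<lambda>i. \<rho> - inverse (real i) \<le> real (nat \<lfloor>\<rho> * real i\<rfloor>) / real i) sequentially"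
    using ev
  proof eventually_elim
    case (elim i)
    then have ip: "real i > 0" by simp
    have "\<rho> * real i - 1 \<le> of_int \<lfloor>\<rho> * real i\<rfloor>" by linarith
    then have "(\<rho> * real i - 1) / real i \<le> of_int \<lfloor>\<rho> * real i\<rfloor> / real i"
      using ip by (intro divide_right_mono) auto
    moreover have "(\<rho> * real i - 1) / real i = \<rho> - inverse (real i)" using ip by (simp add: field_simps)
    ultimately show ?case unfolding fl by simp
  qed
  show "eventually (\<lambda>i. real (nat \<lfloor>\<rho> * real i\<rfloor>) / real i \<le> \<rho>) sequentially"
    using ev
  proof eventually_elim
    case (elim i)
    then have ip: "real i > 0" by simp
    have "of_int \<lfloor>\<rho> * real i\<rfloor> \<le> \<rho> * real i" by linarith
    then have "of_int \<lfloor>\<rho> * real i\<rfloor> / real i \<le> \<rho> * real i / real i"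
      using ip by (intro divide_right_mono) auto
    then show ?case unfolding fl using ip by simp
  qed
qed auto

theorem mainTheorem1:
  fixes \<rho> :: real
  assumes "1/2 < \<rho>" and "\<rho> < 2/3"
  shows "complexityP \<rho> = ereal ((1 - \<rho>) * ln (1 - \<rho>) - (2*\<rho> - 1) * ln (2*\<rho> - 1)
                                - (2 - 3*\<rho>) * ln (2 - 3*\<rho>))"
proof -
  let ?L = "FF (1 - \<rho>) - FF (2*\<rho> - 1) - FF (2 - 3*\<rho>)"
  let ?A = "{s :: nat \<Rightarrow> nat \<times> nat.
        filterlim (\<lambda>i. snd (s i)) at_top sequentially \<and>
        ((\<lambda>i. real (fst (s i)) / real (snd (s i))) \<longlonglongrightarrow> \<rho>)}"
  have each: "limsup (\<lambda>i. ereal (ln (real (JP (fst (s i)) (snd (s i)))) / real (snd (s i)))) = ereal ?L"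
    if "s \<in> ?A" for s
  proof -
    have "(\<lambda>i. ln (real (JP (fst (s i)) (snd (s i)))) / real (snd (s i))) \<longlonglongrightarrow> ?L"
      using key[of "\<lambda>i. snd (s i)" "\<lambda>i. fst (s i)" \<rho>] that assms by simp
    then have "(\<lambda>i. ereal (ln (real (JP (fst (s i)) (snd (s i)))) / real (snd (s i)))) \<longlonglongrightarrow> ereal ?L"
      by (rule tendsto_ereal)
    then show ?thesis by (rule lim_imp_Limsup[OF trivial_limit_sequentially])
  qed
  have ne: "(\<lambda>i. (nat \<lfloor>\<rho> * real i\<rfloor>, i)) \<in> ?A"
  proof -
    have "0 < \<rho>" using assms by simp
    note w = witness[OF this]
    show ?thesis unfolding mem_Collect_eq fst_conv snd_conv
      by (intro conjI filterlim_ident w)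
  qed
  have "complexityP \<rho> = (SUP s \<in> ?A. limsup (\<lambda>i. ereal (ln (real (JP (fst (s i)) (snd (s i)))) / real (snd (s i)))))"
    unfolding complexityP_def by (rule refl)
  also have "\<dots> = (SUP s \<in> ?A. ereal ?L)"
  proof (rule SUP_cong)
    fix s assume "s \<in> ?A"
    then show "limsup (\<lambda>i. ereal (ln (real (JP (fst (s i)) (snd (s i)))) / real (snd (s i)))) = ereal ?L"
      by (rule each)
  qed (rule refl)
  also have "\<dots> = ereal ?L"
  proof (rule SUP_const)
    show "?A \<noteq> {}"
    proof
      assume "?A = {}"
      from equals0D[OF this] ne show False by (rule notE)
    qed
  qed
  finally show ?thesis unfolding FF_def .
qed

end
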